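(* Let $X$ be a normed space with unit sphere $S_X$ and closed unit ball $B_X$, and kernel $k(x,y)=\|x-y\|$. Then $q(S_X,S_X)=q(S_X,B_X)$ and $\overline{M}(S_X,S_X)=\overline{M}(S_X,B_X)$.
   Context: For $H,L\subset X$: $U^\mu(x)=\int\|x-y\|\,d\mu(y)$; $q(H,L):=\inf_{\mu\in\mathfrak{M}_1(H)}\sup_{x\in L}U^\mu(x)$, where $\mathfrak{M}_1(H)$ is the set of regular Borel probability measures on $X$ (norm topology) concentrated on $H$; $\overline{M}_n(H,L):=\inf_{w_1,\dots,w_n\in H}\sup_{x\in L}\frac1n\sum_{j=1}^n\|x-w_j\|$ and $\overline{M}(H,L):=\lim_{n\to\infty}\overline{M}_n(H,L)=\inf_n\overline{M}_n(H,L)$. *)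

theory Defs
  imports "HOL-Probability.Probability"
begin

definition regular_borel_prob :: "'a::real_normed_vector measure \<Rightarrow> bool" where
  "regular_borel_prob M \<longleftrightarrow>
     sets M = sets borel \<and> prob_space M \<and>
     (\<forall>A\<in>sets M. emeasure M A = (SUP K\<in>{K. compact K \<and> K \<subseteq> A}. emeasure M K)) \<and>
     (\<forall>A\<in>sets M. emeasure M A = (INF U\<in>{U. open U \<and> A \<subseteq> U}. emeasure M U))"

definition concentrated_on :: "'a measure \<Rightarrow> 'a set \<Rightarrow> bool" where
  "concentrated_on M H \<longleftrightarrow> (\<exists>N\<in>null_sets M. space M - H \<subseteq> N)"

definition prob_measures_on :: "'a::real_normed_vector set \<Rightarrow> 'a measure set" where
  "prob_measures_on H = {M. regular_borel_prob M \<and> concentrated_on M H}"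

definition potential :: "'a::real_normed_vector measure \<Rightarrow> 'a \<Rightarrow> ennreal" where
  "potential M x = (\<integral>\<^sup>+ y. ennreal (norm (x - y)) \<partial>M)"

definition q_const :: "'a::real_normed_vector set \<Rightarrow> 'a set \<Rightarrow> ennreal" where
  "q_const H L = (INF M\<in>prob_measures_on H. SUP x\<in>L. potential M x)"

definition Mbar_n :: "nat \<Rightarrow> 'a::real_normed_vector set \<Rightarrow> 'a set \<Rightarrow> ennreal" where
  "Mbar_n n H L = (INF w\<in>{w::nat \<Rightarrow> 'a. \<forall>j\<in>{1..n}. w j \<in> H}.
       SUP x\<in>L. ennreal ((1 / real n) * (\<Sum>j=1..n. norm (x - w j))))"

definition Mbar :: "'a::real_normed_vector set \<Rightarrow> 'a set \<Rightarrow> ennreal" where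
  "Mbar H L = (INF n\<in>{1..}. Mbar_n n H L)"

end

theory Submission
  imports Defs
begin

lemma sphere_split:
  fixes x e :: "'a::real_normed_vector"
  assumes x: "norm x < 1" and e: "norm e = 1"
  shows "\<exists>u v a b. norm u = 1 \<and> norm v = 1 \<and> a \<ge> 0 \<and> b \<ge> 0 \<and> a + b = 1 \<and> x = a *\<^sub>R u + b *\<^sub>R v"
proof -
  have c1: "continuous_on {0..2} (\<lambda>s::real. norm (x + s *\<^sub>R e))"
    by (intro continuous_intros)
  have c2: "continuous_on {0..2} (\<lambda>s::real. norm (x - s *\<^sub>R e))"
    by (intro continuous_intros)
  have g1: "1 \<le> norm (x + 2 *\<^sub>R e)"
  proof -
    have "norm (2 *\<^sub>R e) - norm (- x) \<le> norm (2 *\<^sub>R e - (- x))"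
      by (rule norm_triangle_ineq2)
    then show ?thesis using e x by (simp add: add.commute)
  qed
  have g2: "1 \<le> norm (x - 2 *\<^sub>R e)"
  proof -
    have "norm (2 *\<^sub>R e) - norm x \<le> norm (2 *\<^sub>R e - x)"
      by (rule norm_triangle_ineq2)
    then show ?thesis using e x by (simp add: norm_minus_commute)
  qed
  have "\<exists>s\<ge>0. s \<le> 2 \<and> norm (x + s *\<^sub>R e) = 1"
    by (rule IVT'[OF _ g1 _ c1]) (use x in auto)
  then obtain s1 where s1: "0 \<le> s1" "s1 \<le> 2" "norm (x + s1 *\<^sub>R e) = 1" by blast
  have "\<exists>s\<ge>0. s \<le> 2 \<and> norm (x - s *\<^sub>R e) = 1"
    by (rule IVT'[OF _ g2 _ c2]) (use x in auto)
  then obtain s2 where s2: "0 \<le> s2" "s2 \<le> 2" "norm (x - s2 *\<^sub>R e) = 1" by blast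
  have "s1 \<noteq> 0" using s1 x by auto
  hence p1: "s1 > 0" using s1 by auto
  have "s2 \<noteq> 0" using s2 x by auto
  hence p2: "s2 > 0" using s2 by auto
  define a where "a = s2 / (s1 + s2)"
  define b where "b = s1 / (s1 + s2)"
  have sp: "s1 + s2 > 0" using p1 p2 by simp
  have "a + b = (s2 + s1) / (s1 + s2)" unfolding a_def b_def by (simp add: add_divide_distrib)
  also have "\<dots> = 1" using sp by (simp add: add.commute)
  finally have ab3: "a + b = 1" .
  have ab: "a \<ge> 0" "b \<ge> 0" "a + b = 1" using p1 p2 ab3 by (auto simp: a_def b_def)
  have "a *\<^sub>R (x + s1 *\<^sub>R e) + b *\<^sub>R (x - s2 *\<^sub>R e) = (a + b) *\<^sub>R x + (a * s1 - b * s2) *\<^sub>R e"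
    by (simp add: algebra_simps)
  also have "a * s1 - b * s2 = 0" by (simp add: a_def b_def field_simps)
  finally have "x = a *\<^sub>R (x + s1 *\<^sub>R e) + b *\<^sub>R (x - s2 *\<^sub>R e)" using ab by simp
  then show ?thesis using s1 s2 ab by blast
qed

lemma sup_sphere_cball:
  fixes f :: "'a::real_normed_vector \<Rightarrow> ennreal" and e :: 'a
  assumes e: "norm e = 1"
  assumes cv: "\<And>u v a b. a \<ge> 0 \<Longrightarrow> b \<ge> 0 \<Longrightarrow> a + b = 1 \<Longrightarrow>
      f (a *\<^sub>R u + b *\<^sub>R v) \<le> ennreal a * f u + ennreal b * f v"
  shows "(SUP x\<in>sphere 0 1. f x) = (SUP x\<in>cball 0 1. f x)"
proof (rule antisym)
  show "(SUP x\<in>sphere 0 1. f x) \<le> (SUP x\<in>cball 0 1. f x)"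
    by (rule SUP_subset_mono) auto
  show "(SUP x\<in>cball 0 1. f x) \<le> (SUP x\<in>sphere 0 1. f x)"
  proof (rule SUP_least)
    fix x :: 'a assume "x \<in> cball 0 1"
    hence xn: "norm x \<le> 1" by simp
    let ?S = "(SUP x\<in>sphere 0 1. f x)"
    show "f x \<le> ?S"
    proof (cases "norm x = 1")
      case True thus ?thesis by (intro SUP_upper) auto
    next
      case False
      hence "norm x < 1" using xn by simp
      then obtain u v a b where uv: "norm u = 1" "norm v = 1" "a \<ge> 0" "b \<ge> 0" "a + b = 1"
        "x = a *\<^sub>R u + b *\<^sub>R v" using sphere_split[OF \<open>norm x < 1\<close> e] by metis
      have fu: "f u \<le> ?S" using uv by (intro SUP_upper) auto
      have fv: "f v \<le> ?S" using uv by (intro SUP_upper) auto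
      have "f x \<le> ennreal a * f u + ennreal b * f v" using uv cv by simp
      also have "\<dots> \<le> ennreal a * ?S + ennreal b * ?S"
        by (intro add_mono mult_left_mono fu fv) auto
      also have "\<dots> = (ennreal a + ennreal b) * ?S"
        by (simp only: distrib_right)
      also have "ennreal a + ennreal b = 1"
        using ennreal_plus[OF uv(3,4)] uv(5) by simp
      also have "1 * ?S = ?S" by simp
      finally show ?thesis .
    qed
  qed
qed

lemma conv_norm:
  fixes u v y :: "'a::real_normed_vector"
  assumes ab: "a \<ge> 0" "b \<ge> 0" "a + b = 1"
  shows "norm ((a *\<^sub>R u + b *\<^sub>R v) - y) \<le> a * norm (u - y) + b * norm (v - y)"
proof -
  have e1: "a *\<^sub>R (u - y) + b *\<^sub>R (v - y) = a *\<^sub>R u + b *\<^sub>R v - (a + b) *\<^sub>R y"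
    by (simp add: algebra_simps)
  have eq: "(a *\<^sub>R u + b *\<^sub>R v) - y = a *\<^sub>R (u - y) + b *\<^sub>R (v - y)"
    using e1 ab(3) by simp
  have "norm ((a *\<^sub>R u + b *\<^sub>R v) - y) \<le> norm (a *\<^sub>R (u - y)) + norm (b *\<^sub>R (v - y))"
    unfolding eq by (rule norm_triangle_ineq)
  moreover have "norm (a *\<^sub>R (u - y)) = a * norm (u - y)" using ab by simp
  moreover have "norm (b *\<^sub>R (v - y)) = b * norm (v - y)" using ab by simp
  ultimately show ?thesis by linarith
qed

lemma potential_convex:
  fixes M :: "'a::real_normed_vector measure"
  assumes sM: "sets M = sets borel" and ab: "a \<ge> 0" "b \<ge> 0" "a + b = 1"
  shows "potential M (a *\<^sub>R u + b *\<^sub>R v) \<le> ennreal a * potential M u + ennreal b * potential M v"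
proof -
  have meas: "(\<lambda>y. ennreal (norm (w - y))) \<in> borel_measurable M" for w :: 'a
  proof -
    have "(\<lambda>y. ennreal (norm (w - y))) \<in> borel_measurable borel"
      by (intro borel_measurable_continuous_onI continuous_on_ennreal continuous_intros)
    thus ?thesis by (subst measurable_cong_sets[OF sM refl])
  qed
  have pt: "ennreal (norm ((a *\<^sub>R u + b *\<^sub>R v) - y)) \<le> ennreal a * ennreal (norm (u - y)) + ennreal b * ennreal (norm (v - y))" for y
  proof -
    have "norm ((a *\<^sub>R u + b *\<^sub>R v) - y) \<le> a * norm (u - y) + b * norm (v - y)"
      by (rule conv_norm[OF ab])
    hence "ennreal (norm ((a *\<^sub>R u + b *\<^sub>R v) - y)) \<le> ennreal (a * norm (u - y) + b * norm (v - y))"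
      by (rule ennreal_leI)
    also have "\<dots> = ennreal (a * norm (u - y)) + ennreal (b * norm (v - y))"
      using ab by (intro ennreal_plus) auto
    also have "\<dots> = ennreal a * ennreal (norm (u - y)) + ennreal b * ennreal (norm (v - y))"
      using ab by (simp only: ennreal_mult norm_ge_zero)
    finally show ?thesis .
  qed
  have "potential M (a *\<^sub>R u + b *\<^sub>R v) \<le> (\<integral>\<^sup>+ y. ennreal a * ennreal (norm (u - y)) + ennreal b * ennreal (norm (v - y)) \<partial>M)"
    unfolding potential_def by (intro nn_integral_mono pt)
  also have "\<dots> = ennreal a * potential M u + ennreal b * potential M v"
    unfolding potential_def
    by (subst nn_integral_add) (auto intro!: borel_measurable_times_ennreal meas simp: nn_integral_cmult meas)
  finally show ?thesis .
qed

lemma ennreal_comb: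
  fixes a b A B :: real
  assumes "a \<ge> 0" "b \<ge> 0" "A \<ge> 0" "B \<ge> 0"
  shows "ennreal (a * A + b * B) = ennreal a * ennreal A + ennreal b * ennreal B"
  using assms by (simp add: ennreal_plus ennreal_mult)

lemma sum_convex:
  fixes w :: "nat \<Rightarrow> 'a::real_normed_vector"
  assumes ab: "a \<ge> 0" "b \<ge> 0" "a + b = 1"
  shows "ennreal ((1 / real n) * (\<Sum>j=1..n. norm ((a *\<^sub>R u + b *\<^sub>R v) - w j)))
    \<le> ennreal a * ennreal ((1 / real n) * (\<Sum>j=1..n. norm (u - w j)))
      + ennreal b * ennreal ((1 / real n) * (\<Sum>j=1..n. norm (v - w j)))"
proof -
  have pt: "norm ((a *\<^sub>R u + b *\<^sub>R v) - w j) \<le> a * norm (u - w j) + b * norm (v - w j)" for j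
    by (rule conv_norm[OF ab])
  have "(\<Sum>j=1..n. norm ((a *\<^sub>R u + b *\<^sub>R v) - w j)) \<le> (\<Sum>j=1..n. a * norm (u - w j) + b * norm (v - w j))"
    by (intro sum_mono pt)
  also have "\<dots> = a * (\<Sum>j=1..n. norm (u - w j)) + b * (\<Sum>j=1..n. norm (v - w j))"
    by (simp add: sum.distrib sum_distrib_left)
  finally have S: "(\<Sum>j=1..n. norm ((a *\<^sub>R u + b *\<^sub>R v) - w j)) \<le> a * (\<Sum>j=1..n. norm (u - w j)) + b * (\<Sum>j=1..n. norm (v - w j))" .
  have "(1 / real n) * (\<Sum>j=1..n. norm ((a *\<^sub>R u + b *\<^sub>R v) - w j)) \<le> (1 / real n) * (a * (\<Sum>j=1..n. norm (u - w j)) + b * (\<Sum>j=1..n. norm (v - w j)))"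
    by (rule mult_left_mono[OF S]) simp
  then have "(1 / real n) * (\<Sum>j=1..n. norm ((a *\<^sub>R u + b *\<^sub>R v) - w j))
      \<le> a * ((1 / real n) * (\<Sum>j=1..n. norm (u - w j))) + b * ((1 / real n) * (\<Sum>j=1..n. norm (v - w j)))"
    by (simp add: algebra_simps)
  hence "ennreal ((1 / real n) * (\<Sum>j=1..n. norm ((a *\<^sub>R u + b *\<^sub>R v) - w j)))
     \<le> ennreal (a * ((1 / real n) * (\<Sum>j=1..n. norm (u - w j))) + b * ((1 / real n) * (\<Sum>j=1..n. norm (v - w j))))"
    by (rule ennreal_leI)
  also have "\<dots> = ennreal a * ennreal ((1 / real n) * (\<Sum>j=1..n. norm (u - w j)))
      + ennreal b * ennreal ((1 / real n) * (\<Sum>j=1..n. norm (v - w j)))"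
    using ab by (intro ennreal_comb mult_nonneg_nonneg sum_nonneg) auto
  finally show ?thesis .
qed

lemma empty_case_q: "q_const ({}::'a::real_normed_vector set) L = top"
proof -
  have "prob_measures_on ({}::'a set) = {}"
  proof (rule ccontr)
    assume "prob_measures_on ({}::'a set) \<noteq> {}"
    then obtain M :: "'a measure" where M: "regular_borel_prob M" "concentrated_on M {}"
      unfolding prob_measures_on_def by blast
    then obtain N where N: "N \<in> null_sets M" "space M \<subseteq> N"
      unfolding concentrated_on_def by blast
    have ps: "prob_space M" using M unfolding regular_borel_prob_def by auto
    have "N \<subseteq> space M" using N null_setsD2 sets.sets_into_space by blast
    hence "N = space M" using N by auto
    hence "emeasure M (space M) = 0" using N by auto
    thus False using prob_space.emeasure_space_1[OF ps] by simp
  qed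
  thus ?thesis unfolding q_const_def by simp
qed

lemma empty_case_M: "Mbar ({}::'a::real_normed_vector set) L = top"
proof -
  have "Mbar_n n {} L = top" if "n \<in> {1..}" for n
  proof -
    have "{w::nat \<Rightarrow> 'a. \<forall>j\<in>{1..n}. w j \<in> ({}::'a set)} = {}" using that by auto
    thus ?thesis unfolding Mbar_n_def by simp
  qed
  thus ?thesis unfolding Mbar_def by simp
qed

theorem corollary3p8:
  shows "q_const (sphere (0::'a::real_normed_vector) 1) (sphere 0 1) = q_const (sphere (0::'a::real_normed_vector) 1) (cball 0 1)
       \<and> Mbar (sphere (0::'a::real_normed_vector) 1) (sphere 0 1) = Mbar (sphere (0::'a::real_normed_vector) 1) (cball 0 1)"
proof (cases "\<exists>e::'a. norm e = 1")
  case False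
  hence "sphere (0::'a) 1 = {}" by auto
  thus ?thesis by (simp add: empty_case_q empty_case_M)
next
  case True
  then obtain e :: 'a where e: "norm e = 1" by blast
  have q: "q_const (sphere (0::'a) 1) (sphere 0 1) = q_const (sphere (0::'a) 1) (cball 0 1)"
    unfolding q_const_def
  proof (rule INF_cong[OF refl])
    fix M assume "M \<in> prob_measures_on (sphere (0::'a) 1)"
    hence sM: "sets M = sets borel"
      unfolding prob_measures_on_def regular_borel_prob_def by auto
    show "(SUP x\<in>sphere 0 1. potential M x) = (SUP x\<in>cball 0 1. potential M x)"
      by (rule sup_sphere_cball[OF e potential_convex[OF sM]])
  qed
  have m: "Mbar (sphere (0::'a) 1) (sphere 0 1) = Mbar (sphere (0::'a) 1) (cball 0 1)"
    unfolding Mbar_def Mbar_n_def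
    by (intro INF_cong refl sup_sphere_cball[OF e sum_convex])
  show ?thesis using q m by blast
qed

end
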